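(* Let $n\ge 3$ be odd and let $WC_n^d$ denote the fully whiskered $n$-cycle graph. Then $M_2(WC_n^d)\simeq S^{n-1}$.
   Context: The fully whiskered graph of a graph $G$ is obtained by attaching a leaf (a new vertex joined by one edge) to every vertex of $G$; $WC_n^d$ is the fully whiskered graph of the cycle on $n$ vertices. A $2$-matching of a graph is a set of edges such that every vertex has degree at most $2$ in it. $M_2(G)$ is the simplicial complex whose vertices are the edges of $G$ and whose faces are the $2$-matchings of $G$. *)

theory Defs
  imports "HOL-Analysis.Analysis"
begin

text \<open>Simple graphs are given by a set of edges; each edge is a 2-element set of vertices.\<close>

definition whiskered_cycle_edges :: "nat \<Rightarrow> nat set set" where
  "whiskered_cycle_edges n =
     {{i, (i + 1) mod n} | i. i < n} \<union> {{i, n + i} | i. i < n}"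

definition two_matching :: "'v set set \<Rightarrow> 'v set set \<Rightarrow> bool" where
  "two_matching E M \<longleftrightarrow> M \<subseteq> E \<and> (\<forall>v. card {e \<in> M. v \<in> e} \<le> 2)"

definition M2_complex :: "'v set set \<Rightarrow> 'v set set set" where
  "M2_complex E = {M. two_matching E M}"

text \<open>Geometric realization of an abstract simplicial complex K on the finite vertex set V:
  points are convex-combination weights on V whose support is a face of K, topologized as a
  subspace of the product topology.\<close>
definition geom_realization :: "'a set \<Rightarrow> 'a set set \<Rightarrow> ('a \<Rightarrow> real) topology" where
  "geom_realization V K = subtopology (powertop_real UNIV)
     {f. (\<forall>v. 0 \<le> f v) \<and> (\<forall>v. v \<notin> V \<longrightarrow> f v = 0) \<and> sum f V = 1 \<and> {v \<in> V. f v \<noteq> 0} \<in> K}"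

end

theory Submission imports Defs begin


lemma deform_equiv:
  fixes S S' :: "('a \<Rightarrow> real) set" and r :: "('a \<Rightarrow> real) \<Rightarrow> ('a \<Rightarrow> real)"
  assumes sub: "S' \<subseteq> S"
    and into: "\<And>f. f \<in> S \<Longrightarrow> r f \<in> S'"
    and fixr: "\<And>f. f \<in> S' \<Longrightarrow> r f = f"
    and cont: "\<And>v. continuous_map (subtopology (powertop_real UNIV) S) euclideanreal (\<lambda>f. r f v)"
    and seg: "\<And>f t. f \<in> S \<Longrightarrow> 0 \<le> t \<Longrightarrow> t \<le> 1 \<Longrightarrow> (\<lambda>v. (1 - t) * r f v + t * f v) \<in> S"
  shows "subtopology (powertop_real UNIV) S homotopy_equivalent_space subtopology (powertop_real UNIV) S'"
proof (rule deformation_retraction_imp_homotopy_equivalent_space)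
  let ?X = "subtopology (powertop_real UNIV) S"
  have cr: "continuous_map ?X (powertop_real UNIV) r"
    using cont by (simp add: continuous_map_componentwise_UNIV)
  show "retraction_maps ?X (subtopology (powertop_real UNIV) S') r id"
    unfolding retraction_maps_def
  proof (intro conjI)
    show "continuous_map ?X (subtopology (powertop_real UNIV) S') r"
      using cr into by (auto simp: continuous_map_in_subtopology)
    show "continuous_map (subtopology (powertop_real UNIV) S') ?X id"
      using sub by (auto simp: continuous_map_in_subtopology intro!: continuous_map_from_subtopology)
    show "\<forall>x\<in>topspace (subtopology (powertop_real UNIV) S'). r (id x) = x"
      using fixr by auto
  qed
  define h where "h = (\<lambda>(t::real, f). (\<lambda>v. (1 - t) * r f v + t * f v))"
  show "homotopic_with (\<lambda>x. True) ?X ?X (id \<circ> r) id"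
    unfolding homotopic_with_def
  proof (intro exI conjI allI ballI)
    have ct: "continuous_map (prod_topology (top_of_set {0..1}) ?X) euclideanreal fst"
      by (metis continuous_map_fst continuous_map_into_fulltopology)
    have cv: "continuous_map (prod_topology (top_of_set {0..1}) ?X) euclideanreal (\<lambda>p. r (snd p) v)" for v
      using continuous_map_compose[OF continuous_map_snd cont[of v]] by (simp add: o_def)
    have cv2: "continuous_map (prod_topology (top_of_set {0..1}) ?X) euclideanreal (\<lambda>p. snd p v)" for v
      using continuous_map_compose[OF continuous_map_snd continuous_map_from_subtopology[OF continuous_map_product_projection[of v UNIV "\<lambda>_. euclideanreal"]]]
      by (simp add: o_def)
    have "continuous_map (prod_topology (top_of_set {0..1}) ?X) (powertop_real UNIV) h"
      unfolding continuous_map_componentwise_UNIV h_def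
      by (auto simp: case_prod_beta intro!: continuous_intros ct cv cv2)
    moreover have "h p \<in> S" if "p \<in> topspace (prod_topology (top_of_set {0..1}) ?X)" for p
      using that seg by (auto simp: h_def)
    ultimately show "continuous_map (prod_topology (top_of_set {0..1}) ?X) ?X h"
      by (auto simp: continuous_map_in_subtopology)
  qed (auto simp: h_def)
qed

locale wc = fixes n :: nat assumes n3: "3 \<le> n" and nodd: "odd n"
begin

definition c :: "nat \<Rightarrow> nat set" where "c i = {i, (i + 1) mod n}"
definition w :: "nat \<Rightarrow> nat set" where "w i = {i, n + i}"
definition pre :: "nat \<Rightarrow> nat" where "pre i = (if i = 0 then n - 1 else i - 1)"
abbreviation E where "E \<equiv> whiskered_cycle_edges n"

lemma suc_mod: "i < n \<Longrightarrow> Suc i mod n = (if Suc i = n then 0 else Suc i)"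
  by auto

lemma E_eq: "E = c ` {..<n} \<union> w ` {..<n}"
  unfolding whiskered_cycle_edges_def c_def w_def by auto

lemma finE: "finite E" by (simp add: E_eq)

lemma c_in[simp]: "i < n \<Longrightarrow> c i \<in> E" by (simp add: E_eq)
lemma w_in[simp]: "i < n \<Longrightarrow> w i \<in> E" by (simp add: E_eq)

lemma c_inj[simp]: "i < n \<Longrightarrow> j < n \<Longrightarrow> c i = c j \<longleftrightarrow> i = j"
  using n3 unfolding c_def by (auto simp: suc_mod doubleton_eq_iff split: if_splits)

lemma w_inj[simp]: "w i = w j \<longleftrightarrow> i = j"
  unfolding w_def by (auto simp: doubleton_eq_iff)

lemma c_ne_w[simp]: "i < n \<Longrightarrow> c i \<noteq> w j" "i < n \<Longrightarrow> w j \<noteq> c i"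
proof -
  assume "i < n"
  have "n + j \<in> w j" by (simp add: w_def)
  moreover have "n + j \<notin> c i" using \<open>i < n\<close> n3 by (auto simp: c_def suc_mod)
  ultimately show "c i \<noteq> w j" "w j \<noteq> c i" by auto
qed

lemma pre_lt[simp]: "i < n \<Longrightarrow> pre i < n" using n3 by (auto simp: pre_def)
lemma pre_ne[simp]: "i < n \<Longrightarrow> pre i \<noteq> i" using n3 by (cases i) (auto simp: pre_def)

lemma c_pre: "i < n \<Longrightarrow> c (pre i) = {pre i, i}"
  using n3 unfolding c_def pre_def by (auto simp: suc_mod)

lemma inc_lt: "i < n \<Longrightarrow> {e \<in> E. i \<in> e} = {c (pre i), c i, w i}"
proof -
  assume i: "i < n"
  have "e = c (pre i) \<or> e = c i \<or> e = w i" if "e \<in> E" "i \<in> e" for e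
  proof -
    from that(1) consider (a) j where "j < n" "e = c j" | (b) j where "j < n" "e = w j"
      unfolding E_eq by auto
    then show ?thesis
    proof cases
      case a
      then have "i = j \<or> i = (j + 1) mod n" using that(2) by (auto simp: c_def)
      then show ?thesis
      proof
        assume "i = (j + 1) mod n"
        then have "j = pre i" using a(1) n3 by (auto simp: pre_def suc_mod split: if_splits)
        then show ?thesis using a by simp
      qed (use a in simp)
    next
      case b
      then show ?thesis using that(2) i by (auto simp: w_def)
    qed
  qed
  moreover have "i \<in> c (pre i)" using i by (simp add: c_pre)
  moreover have "i \<in> c i" "i \<in> w i" by (auto simp: c_def w_def)
  ultimately show ?thesis using i by auto
qed

lemma inc_ge: "n \<le> v \<Longrightarrow> {e \<in> E. v \<in> e} \<subseteq> {w (v - n)}"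
proof
  fix e assume v: "n \<le> v" and e: "e \<in> {e \<in> E. v \<in> e}"
  then consider (a) j where "j < n" "e = c j" | (b) j where "j < n" "e = w j"
    unfolding E_eq by auto
  then show "e \<in> {w (v - n)}"
  proof cases
    case a then show ?thesis using e v by (auto simp: c_def suc_mod split: if_splits)
  next
    case b then show ?thesis using e v by (auto simp: w_def)
  qed
qed

lemma two_matching_iff:
  assumes "M \<subseteq> E"
  shows "two_matching E M \<longleftrightarrow> (\<forall>i<n. \<not> (c (pre i) \<in> M \<and> c i \<in> M \<and> w i \<in> M))"
proof
  assume tm: "two_matching E M"
  show "\<forall>i<n. \<not> (c (pre i) \<in> M \<and> c i \<in> M \<and> w i \<in> M)"
  proof (intro allI impI notI)
    fix i assume i: "i < n" and all3: "c (pre i) \<in> M \<and> c i \<in> M \<and> w i \<in> M"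
    have "{c (pre i), c i, w i} \<subseteq> {e \<in> M. i \<in> e}"
      using all3 inc_lt[OF i] assms by auto
    moreover have "finite {e \<in> M. i \<in> e}" using finite_subset[OF assms finE] by simp
    ultimately have "card {c (pre i), c i, w i} \<le> card {e \<in> M. i \<in> e}" by (rule card_mono[rotated])
    moreover have "card {c (pre i), c i, w i} = 3" using i by simp
    moreover have "card {e \<in> M. i \<in> e} \<le> 2" using tm by (simp add: two_matching_def)
    ultimately show False by simp
  qed
next
  assume h: "\<forall>i<n. \<not> (c (pre i) \<in> M \<and> c i \<in> M \<and> w i \<in> M)"
  have "card {e \<in> M. v \<in> e} \<le> 2" for v
  proof (cases "v < n")
    case True
    have "{e \<in> M. v \<in> e} \<subseteq> {c (pre v), c v, w v} - ({c (pre v), c v, w v} - M)"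
      using inc_lt[OF True] assms by auto
    moreover have "card ({c (pre v), c v, w v} - ({c (pre v), c v, w v} - M)) \<le> 2"
    proof -
      obtain x where x: "x \<in> {c (pre v), c v, w v}" "x \<notin> M" using h True by auto
      have "{c (pre v), c v, w v} - ({c (pre v), c v, w v} - M) \<subseteq> {c (pre v), c v, w v} - {x}"
        using x by auto
      moreover have "card ({c (pre v), c v, w v} - {x}) = 2" using x True by (auto simp: card_Diff_singleton)
      ultimately show ?thesis by (metis card_mono finite.emptyI finite.insertI finite_Diff)
    qed
    ultimately show ?thesis by (meson card_mono dual_order.trans finite.emptyI finite.insertI finite_Diff)
  next
    case False
    then have "{e \<in> M. v \<in> e} \<subseteq> {w (v - n)}" using inc_ge[of v] assms by auto
    then have "card {e \<in> M. v \<in> e} \<le> 1" by (metis card.empty card.insert finite.intros(1) card_mono empty_iff finite_insert One_nat_def)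
    then show ?thesis by simp
  qed
  then show "two_matching E M" using assms by (simp add: two_matching_def)
qed

end
context wc begin

definition k :: nat where "k = n div 2"
lemma n_eq: "n = 2 * k + 1" using nodd unfolding k_def by presburger
lemma k_ge: "1 \<le> k" using n3 n_eq by linarith

definition Good :: "(nat set \<Rightarrow> real) \<Rightarrow> bool" where
  "Good f \<longleftrightarrow> (\<forall>v. 0 \<le> f v) \<and> (\<forall>v. v \<notin> E \<longrightarrow> f v = 0) \<and> sum f E = 1"
definition sat :: "nat set set set \<Rightarrow> (nat set \<Rightarrow> real) \<Rightarrow> bool" where
  "sat CL f \<longleftrightarrow> (\<forall>cl\<in>CL. \<exists>e\<in>cl. f e = 0)"
definition PP :: "nat set set set \<Rightarrow> (nat set \<Rightarrow> real) set" where
  "PP CL = {f. Good f \<and> sat CL f}"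

definition TriCl where "TriCl = {{c (pre i), c i, w i} | i. i < n}"
definition Cl1 where "Cl1 = TriCl \<union> {{c (2*j-1), w (2*j)} | j. 1 \<le> j \<and> j \<le> k}"
definition Cl2 where "Cl2 = TriCl \<union> {{w (2*j)} | j. 1 \<le> j \<and> j \<le> k}"
definition Cl3 where "Cl3 = Cl2 \<union> {{c (2*k), w 0}}"

lemma sat_Tri: "sat TriCl f \<longleftrightarrow> (\<forall>i<n. f (c (pre i)) = 0 \<or> f (c i) = 0 \<or> f (w i) = 0)"
  unfolding sat_def TriCl_def by auto

end
context wc begin
lemma geom_eq: "geom_realization E (M2_complex E) = subtopology (powertop_real UNIV) (PP TriCl)"
proof -
  have "{v \<in> E. f v \<noteq> 0} \<in> M2_complex E \<longleftrightarrow> sat TriCl f" for f :: "nat set \<Rightarrow> real"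
  proof -
    have "{v \<in> E. f v \<noteq> 0} \<in> M2_complex E \<longleftrightarrow> two_matching E {v \<in> E. f v \<noteq> 0}"
      by (simp add: M2_complex_def)
    also have "\<dots> \<longleftrightarrow> (\<forall>i<n. \<not> (c (pre i) \<in> {v \<in> E. f v \<noteq> 0} \<and> c i \<in> {v \<in> E. f v \<noteq> 0} \<and> w i \<in> {v \<in> E. f v \<noteq> 0}))"
      by (rule two_matching_iff) auto
    also have "\<dots> \<longleftrightarrow> sat TriCl f" by (auto simp: sat_Tri)
    finally show ?thesis .
  qed
  then show ?thesis unfolding geom_realization_def PP_def Good_def by simp
qed

lemma seg_in:
  assumes "Good f" "Good g" "\<And>cl. cl \<in> CL \<Longrightarrow> \<exists>e\<in>cl. f e = 0 \<and> g e = 0" "0 \<le> t" "t \<le> 1"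
  shows "(\<lambda>v. (1 - t) * g v + t * f v) \<in> PP CL"
proof -
  have "sum (\<lambda>v. (1 - t) * g v + t * f v) E = (1 - t) * sum g E + t * sum f E"
    by (simp add: sum.distrib sum_distrib_left)
  also have "\<dots> = 1" using assms(1,2) by (simp add: Good_def)
  finally have s: "sum (\<lambda>v. (1 - t) * g v + t * f v) E = 1" .
  have nn: "0 \<le> (1 - t) * g v + t * f v" for v
    using assms(1,2,4,5) by (simp add: Good_def)
  have z: "(\<lambda>v. (1 - t) * g v + t * f v) v = 0" if "v \<notin> E" for v
    using that assms(1,2) by (simp add: Good_def)
  have sa: "\<exists>e\<in>cl. (\<lambda>v. (1 - t) * g v + t * f v) e = 0" if cl: "cl \<in> CL" for cl
  proof -
    obtain e where "e \<in> cl" "f e = 0" "g e = 0" using assms(3)[OF cl] by blast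
    then show ?thesis by force
  qed
  show ?thesis unfolding PP_def Good_def sat_def using s nn z sa by blast
qed

lemma proj_cont[continuous_intros]: "continuous_map (subtopology (powertop_real UNIV) S) euclideanreal (\<lambda>f. f e)"
  by (rule continuous_map_from_subtopology[OF continuous_map_product_projection]) simp

lemma stage:
  assumes "PP CL' \<subseteq> PP CL"
    and "\<And>f. f \<in> PP CL \<Longrightarrow> Good (r f) \<and> sat CL' (r f)"
    and "\<And>f. f \<in> PP CL' \<Longrightarrow> r f = f"
    and "\<And>v. continuous_map (subtopology (powertop_real UNIV) (PP CL)) euclideanreal (\<lambda>f. r f v)"
    and "\<And>f cl. f \<in> PP CL \<Longrightarrow> cl \<in> CL \<Longrightarrow> \<exists>e\<in>cl. f e = 0 \<and> r f e = 0"
  shows "subtopology (powertop_real UNIV) (PP CL) homotopy_equivalent_space subtopology (powertop_real UNIV) (PP CL')"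
proof (rule deform_equiv[OF assms(1) _ assms(3) assms(4)])
  show "r f \<in> PP CL'" if "f \<in> PP CL" for f using assms(2)[OF that] by (simp add: PP_def)
  show "(\<lambda>v. (1 - t) * r f v + t * f v) \<in> PP CL" if "f \<in> PP CL" "0 \<le> t" "t \<le> 1" for f t
  proof (rule seg_in)
    show "Good f" using that(1) by (simp add: PP_def)
    show "Good (r f)" using assms(2)[OF that(1)] by simp
    show "\<exists>e\<in>cl. f e = 0 \<and> r f e = 0" if "cl \<in> CL" for cl using assms(5)[OF \<open>f \<in> PP CL\<close> that] .
  qed (use that in auto)
qed

end
context wc begin
definition dl :: "nat set \<Rightarrow> nat set \<Rightarrow> real" where "dl e v = (if v = e then 1 else 0)"

lemma sum_dl: "e \<in> E \<Longrightarrow> sum (dl e) E = 1"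
  by (simp add: dl_def finE)

lemma Good_sum_split: "sum f E = (\<Sum>i<n. f (c i)) + (\<Sum>i<n. f (w i))"
proof -
  have "sum f E = sum f (c ` {..<n}) + sum f (w ` {..<n})"
    unfolding E_eq by (rule sum.union_disjoint) auto
  also have "sum f (c ` {..<n}) = (\<Sum>i<n. f (c i))"
    by (rule sum.reindex_cong[of c]) (auto simp: inj_on_def)
  also have "sum f (w ` {..<n}) = (\<Sum>i<n. f (w i))"
    by (rule sum.reindex_cong[of w]) (auto simp: inj_on_def)
  finally show ?thesis .
qed

lemma E_cases: "v \<in> E \<Longrightarrow> (\<And>i. i < n \<Longrightarrow> v = c i \<Longrightarrow> P) \<Longrightarrow> (\<And>i. i < n \<Longrightarrow> v = w i \<Longrightarrow> P) \<Longrightarrow> P"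
  unfolding E_eq by auto

lemma sum_delta_j:
  assumes "\<And>j. j \<in> {1..k} \<Longrightarrow> P j \<longleftrightarrow> j = j0"
  shows "(\<Sum>j\<in>{1..k}. if P j then a j else 0) = (if j0 \<in> {1..k} then a j0 else 0)"
proof -
  have "(\<Sum>j\<in>{1..k}. if P j then a j else 0) = (\<Sum>j\<in>{1..k}. if j = j0 then a j else 0)"
    using assms by (intro sum.cong) auto
  also have "\<dots> = (if j0 \<in> {1..k} then a j0 else 0)" by (simp add: sum.delta)
  finally show ?thesis .
qed

end
context wc begin

lemma idx[simp]: "j \<le> k \<Longrightarrow> 2*j - 1 < n" "j \<le> k \<Longrightarrow> 2*j - Suc 0 < n" "j \<le> k \<Longrightarrow> 2*j < n" "k < n" "2*k < n"
  using n_eq by auto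

lemma H1: assumes "i < n"
  shows "(\<Sum>j\<in>{1..k}. if i = 2*j-1 then a j else 0) = (if odd i then a (Suc i div 2) else (0::real))"
proof (cases "odd i")
  case True
  have "(\<Sum>j\<in>{1..k}. if i = 2*j-1 then a j else 0) = (if Suc i div 2 \<in> {1..k} then a (Suc i div 2) else 0)"
    by (rule sum_delta_j) (use True in presburger)
  moreover have "Suc i div 2 \<in> {1..k}" using True assms n_eq by (simp; presburger)
  ultimately show ?thesis using True by simp
next
  case False
  have "i \<noteq> 2*j-1" if "j \<in> {1..k}" for j using False that by auto
  then show ?thesis using False by (intro trans[OF sum.neutral]) auto
qed

lemma H2: assumes "i < n"
  shows "(\<Sum>j\<in>{1..k}. if i = 2*j then a j else 0) = (if even i \<and> i \<noteq> 0 then a (i div 2) else (0::real))"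
proof (cases "even i \<and> i \<noteq> 0")
  case True
  have "(\<Sum>j\<in>{1..k}. if i = 2*j then a j else 0) = (if i div 2 \<in> {1..k} then a (i div 2) else 0)"
    by (rule sum_delta_j) (use True in presburger)
  moreover have "i div 2 \<in> {1..k}" using True assms n_eq by auto
  ultimately show ?thesis using True by simp
next
  case False
  then show ?thesis by (intro trans[OF sum.neutral]) auto
qed

definition tg :: "nat \<Rightarrow> nat" where "tg j = (if j = k then 0 else 2*j+1)"

lemma tg_lt[simp]: "j \<le> k \<Longrightarrow> tg j < n" using n_eq by (auto simp: tg_def)

lemma H3: assumes "i < n"
  shows "(\<Sum>j\<in>{1..k}. if i = tg j then a j else 0) =
     (if i = 0 then a k else if odd i \<and> 3 \<le> i then a (i div 2) else (0::real))"
proof -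
  consider "i = 0" | "odd i" "3 \<le> i" | "\<not> (i = 0 \<or> (odd i \<and> 3 \<le> i))" by blast
  then show ?thesis
  proof cases
    case 1
    have "(\<Sum>j\<in>{1..k}. if i = tg j then a j else 0) = (if k \<in> {1..k} then a k else 0)"
      by (rule sum_delta_j) (use 1 in \<open>auto simp: tg_def\<close>)
    then show ?thesis using 1 k_ge by simp
  next
    case 2
    have "(\<Sum>j\<in>{1..k}. if i = tg j then a j else 0) = (if i div 2 \<in> {1..k} then a (i div 2) else 0)"
      by (rule sum_delta_j) (use 2 assms n_eq in \<open>auto simp: tg_def\<close>)
    moreover have "i div 2 \<in> {1..k}" using 2 assms n_eq by auto
    ultimately show ?thesis using 2 by simp
  next
    case 3
    then show ?thesis by (intro trans[OF sum.neutral]) (auto simp: tg_def)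
  qed
qed

definition m1 :: "(nat set \<Rightarrow> real) \<Rightarrow> nat \<Rightarrow> real" where
  "m1 f j = min (f (c (2*j-1))) (f (w (2*j)))"
definition r1 :: "(nat set \<Rightarrow> real) \<Rightarrow> (nat set \<Rightarrow> real)" where
  "r1 f = (\<lambda>v. f v + (\<Sum>j\<in>{1..k}. m1 f j * (2 * dl (w (tg j)) v - dl (c (2*j-1)) v - dl (w (2*j)) v)))"

lemma r1_c: assumes "i < n"
  shows "r1 f (c i) = f (c i) - (if odd i then m1 f (Suc i div 2) else 0)"
proof -
  have "(\<Sum>j\<in>{1..k}. m1 f j * (2 * dl (w (tg j)) (c i) - dl (c (2*j-1)) (c i) - dl (w (2*j)) (c i)))
      = - (\<Sum>j\<in>{1..k}. if i = 2*j-1 then m1 f j else 0)"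
    unfolding sum_negf[symmetric] by (rule sum.cong) (use assms in \<open>auto simp: dl_def\<close>)
  then show ?thesis unfolding r1_def using H1[OF assms] by simp
qed

lemma r1_w: assumes "i < n"
  shows "r1 f (w i) = f (w i) + 2 * (if i = 0 then m1 f k else if odd i \<and> 3 \<le> i then m1 f (i div 2) else 0)
     - (if even i \<and> i \<noteq> 0 then m1 f (i div 2) else 0)"
proof -
  have "(\<Sum>j\<in>{1..k}. m1 f j * (2 * dl (w (tg j)) (w i) - dl (c (2*j-1)) (w i) - dl (w (2*j)) (w i)))
      = (\<Sum>j\<in>{1..k}. 2 * (if i = tg j then m1 f j else 0) - (if i = 2*j then m1 f j else 0))"
    by (rule sum.cong) (use assms in \<open>auto simp: dl_def\<close>)
  also have "\<dots> = 2 * (\<Sum>j\<in>{1..k}. if i = tg j then m1 f j else 0) - (\<Sum>j\<in>{1..k}. if i = 2*j then m1 f j else 0)"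
    by (simp add: sum_subtractf sum_distrib_left)
  finally show ?thesis unfolding r1_def using H2[OF assms] H3[OF assms] by simp
qed

lemma dl_out: "v \<notin> E \<Longrightarrow> e \<in> E \<Longrightarrow> dl e v = 0" by (auto simp: dl_def)

lemma r1_out: "v \<notin> E \<Longrightarrow> r1 f v = f v"
  unfolding r1_def by (auto intro!: sum.neutral simp: dl_out)

lemma r1_sum: "sum (r1 f) E = sum f E"
proof -
  have "sum (r1 f) E = sum f E + (\<Sum>v\<in>E. \<Sum>j\<in>{1..k}. m1 f j * (2 * dl (w (tg j)) v - dl (c (2*j-1)) v - dl (w (2*j)) v))"
    unfolding r1_def by (simp add: sum.distrib)
  also have "(\<Sum>v\<in>E. \<Sum>j\<in>{1..k}. m1 f j * (2 * dl (w (tg j)) v - dl (c (2*j-1)) v - dl (w (2*j)) v))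
     = (\<Sum>j\<in>{1..k}. m1 f j * (2 * sum (dl (w (tg j))) E - sum (dl (c (2*j-1))) E - sum (dl (w (2*j))) E))"
    by (subst sum.swap) (simp add: sum_subtractf flip: sum_distrib_left)
  also have "\<dots> = 0" by (intro sum.neutral) (auto simp: sum_dl)
  finally show ?thesis by simp
qed

lemma r1_cont: "continuous_map (subtopology (powertop_real UNIV) S) euclideanreal (\<lambda>f. r1 f v)"
  unfolding r1_def m1_def by (intro continuous_intros) auto

end
context wc begin

lemma pre0: "pre 0 = 2*k" using n_eq by (simp add: pre_def)
lemma preS: "0 < i \<Longrightarrow> pre i = i - 1" by (simp add: pre_def)

lemma sat_mono: "sat CL f \<Longrightarrow> CL' \<subseteq> CL \<Longrightarrow> sat CL' f" by (auto simp: sat_def)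
lemma PP_mono: "CL' \<subseteq> CL \<Longrightarrow> PP CL \<subseteq> PP CL'" by (auto simp: PP_def sat_def)

lemma PP_D: assumes "f \<in> PP CL" "TriCl \<subseteq> CL"
  shows "\<And>v. 0 \<le> f v" "\<And>v. v \<notin> E \<Longrightarrow> f v = 0" "sum f E = 1"
    "\<And>i. i < n \<Longrightarrow> f (c (pre i)) = 0 \<or> f (c i) = 0 \<or> f (w i) = 0"
  using assms sat_mono[of CL f TriCl] by (auto simp: PP_def Good_def sat_Tri)

lemma min0: "0 \<le> (a::real) \<Longrightarrow> b = 0 \<Longrightarrow> min a b = 0" "a = 0 \<Longrightarrow> 0 \<le> (b::real) \<Longrightarrow> min a b = 0"
  by auto

lemma odd_idx: "odd (i::nat) \<Longrightarrow> 2 * (Suc i div 2) - 1 = i" by presburger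
lemma even_idx: "even (i::nat) \<Longrightarrow> 2 * (i div 2) = i" by presburger

lemma m1_nonneg: "(\<And>v. 0 \<le> f v) \<Longrightarrow> 0 \<le> m1 f j" by (simp add: m1_def)

lemma r1_nonneg: assumes "\<And>v. 0 \<le> f v" shows "0 \<le> r1 f v"
proof (cases "v \<in> E")
  case True
  then show ?thesis
  proof (rule E_cases)
    fix i assume i: "i < n" "v = c i"
    show ?thesis using assms[of "c i"] i
      by (auto simp: r1_c m1_def odd_idx)
  next
    fix i assume i: "i < n" "v = w i"
    have T: "0 \<le> (if i = 0 then m1 f k else if odd i \<and> 3 \<le> i then m1 f (i div 2) else 0)"
      using m1_nonneg[OF assms] by simp
    have S: "(if even i \<and> i \<noteq> 0 then m1 f (i div 2) else 0) \<le> f (w i)"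
      using assms[of "w i"] by (auto simp: m1_def even_idx min_le_iff_disj)
    show ?thesis using T S i by (simp add: r1_w)
  qed
next
  case False then show ?thesis using assms by (simp add: r1_out)
qed

lemma Zc1: assumes "\<And>v. 0 \<le> f v" "i < n" "f (c i) = 0" shows "r1 f (c i) = 0"
  using assms(1)[of "w (Suc i)"] assms(2,3) by (auto simp: r1_c m1_def odd_idx)

lemma Zw1: assumes f: "f \<in> PP TriCl" and i: "i < n" and z: "f (w i) = 0" and nz: "f (c (pre i)) \<noteq> 0"
  shows "r1 f (w i) = 0"
proof -
  note D = PP_D[OF f order_refl]
  have S: "(if even i \<and> i \<noteq> 0 then m1 f (i div 2) else 0) = 0"
    using z D(1) by (auto simp: m1_def even_idx intro: min0)
  have T: "(if i = 0 then m1 f k else if odd i \<and> 3 \<le> i then m1 f (i div 2) else 0) = 0"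
  proof (cases "i = 0")
    case True
    have "f (c (2*k)) \<noteq> 0" using nz True pre0 by simp
    moreover have "f (c (pre (2*k))) = 0 \<or> f (c (2*k)) = 0 \<or> f (w (2*k)) = 0" using D(4)[of "2*k"] by simp
    moreover have "pre (2*k) = 2*k - 1" using k_ge by (simp add: preS)
    ultimately have "m1 f k = 0" using D(1) by (auto simp: m1_def intro: min0)
    then show ?thesis using True by simp
  next
    case False
    show ?thesis
    proof (cases "odd i \<and> 3 \<le> i")
      case True
      define j where "j = i div 2"
      have ij0: "i = 2*j + 1" using True unfolding j_def by presburger
      have ij: "i = 2*j + 1" "pre i = 2*j" "pre (2*j) = 2*j - 1" "1 \<le> j"
        using True ij0 by (auto simp: preS)
      have "2*j < n" using i ij by simp
      then have "f (c (pre (2*j))) = 0 \<or> f (c (2*j)) = 0 \<or> f (w (2*j)) = 0" using D(4)[of "2*j"] by simp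
      moreover have "f (c (2*j)) \<noteq> 0" using nz ij by simp
      ultimately have "m1 f j = 0" using D(1) ij by (auto simp: m1_def intro: min0)
      then show ?thesis using True False by (simp add: j_def)
    qed (use False in auto)
  qed
  show ?thesis using S T z i by (simp add: r1_w)
qed

lemma TriBoth1: assumes f: "f \<in> PP TriCl" and cl: "cl \<in> TriCl"
  shows "\<exists>e\<in>cl. f e = 0 \<and> r1 f e = 0"
proof -
  note D = PP_D[OF f order_refl]
  obtain i where i: "i < n" "cl = {c (pre i), c i, w i}" using cl by (auto simp: TriCl_def)
  consider "f (c (pre i)) = 0" | "f (c i) = 0" | "f (w i) = 0" "f (c (pre i)) \<noteq> 0" using D(4)[OF i(1)] by blast
  then show ?thesis
  proof cases
    case 1 then show ?thesis using Zc1[OF D(1), of "pre i"] i by auto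
  next
    case 2 then show ?thesis using Zc1[OF D(1), of i] i by auto
  next
    case 3 then show ?thesis using Zw1[OF f i(1)] i by auto
  qed
qed

lemma r1_into: assumes f: "f \<in> PP TriCl" shows "Good (r1 f) \<and> sat Cl1 (r1 f)"
proof -
  note D = PP_D[OF f order_refl]
  have G: "Good (r1 f)" unfolding Good_def
    using r1_nonneg[OF D(1)] r1_out D(2,3) r1_sum by auto
  have "\<exists>e\<in>cl. r1 f e = 0" if cl1: "cl \<in> Cl1" for cl
  proof (cases "cl \<in> TriCl")
    case True then show ?thesis using TriBoth1[OF f] by blast
  next
    case False
    then obtain j where j: "1 \<le> j" "j \<le> k" "cl = {c (2*j-1), w (2*j)}" using cl1 by (auto simp: Cl1_def)
    have a: "r1 f (c (2*j-1)) = f (c (2*j-1)) - m1 f j"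
    proof -
      have "odd (2*j-1)" "Suc (2*j-1) div 2 = j" using j by auto
      then show ?thesis using j by (simp add: r1_c)
    qed
    have b: "r1 f (w (2*j)) = f (w (2*j)) - m1 f j" using j by (simp add: r1_w)
    show ?thesis using a b j by (auto simp: m1_def min_def)
  qed
  then show ?thesis using G by (simp add: sat_def)
qed

lemma Cl1_sub: "PP Cl1 \<subseteq> PP TriCl" by (rule PP_mono) (auto simp: Cl1_def)

lemma r1_fix: assumes f: "f \<in> PP Cl1" shows "r1 f = f"
proof -
  have D: "\<And>v. 0 \<le> f v" using f by (auto simp: PP_def Good_def)
  have "m1 f j = 0" if "j \<in> {1..k}" for j
  proof -
    have "{c (2*j-1), w (2*j)} \<in> Cl1" using that by (auto simp: Cl1_def)
    then have "f (c (2*j-1)) = 0 \<or> f (w (2*j)) = 0" using f by (auto simp: PP_def sat_def)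
    then show ?thesis using D by (auto simp: m1_def intro: min0)
  qed
  then show ?thesis unfolding r1_def by (auto intro!: sum.neutral)
qed

lemma stage1: "subtopology (powertop_real UNIV) (PP TriCl) homotopy_equivalent_space subtopology (powertop_real UNIV) (PP Cl1)"
  by (rule stage[OF Cl1_sub r1_into r1_fix r1_cont TriBoth1])

end
context wc begin

definition r2 :: "(nat set \<Rightarrow> real) \<Rightarrow> (nat set \<Rightarrow> real)" where
  "r2 f = (\<lambda>v. f v + (\<Sum>j\<in>{1..k}. f (w (2*j)) * (dl (w (2*j-1)) v - dl (w (2*j)) v)))"

lemma r2_c: assumes "i < n" shows "r2 f (c i) = f (c i)"
  unfolding r2_def using assms by (auto intro!: sum.neutral simp: dl_def)

lemma even_Suc_idx: "odd (i::nat) \<Longrightarrow> 2 * (Suc i div 2) = Suc i" by presburger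

lemma r2_w: assumes "i < n"
  shows "r2 f (w i) = f (w i) + (if odd i then f (w (Suc i)) else 0) - (if even i \<and> i \<noteq> 0 then f (w i) else 0)"
proof -
  have "(\<Sum>j\<in>{1..k}. f (w (2*j)) * (dl (w (2*j-1)) (w i) - dl (w (2*j)) (w i)))
      = (\<Sum>j\<in>{1..k}. (if i = 2*j-1 then f (w (2*j)) else 0) - (if i = 2*j then f (w (2*j)) else 0))"
    by (rule sum.cong) (auto simp: dl_def)
  also have "\<dots> = (\<Sum>j\<in>{1..k}. if i = 2*j-1 then f (w (2*j)) else 0) - (\<Sum>j\<in>{1..k}. if i = 2*j then f (w (2*j)) else 0)"
    by (simp add: sum_subtractf)
  finally show ?thesis unfolding r2_def using H1[OF assms] H2[OF assms]
    by (simp add: even_Suc_idx even_idx)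
qed

lemma r2_out: "v \<notin> E \<Longrightarrow> r2 f v = f v"
  unfolding r2_def by (auto intro!: sum.neutral simp: dl_out)

lemma r2_sum: "sum (r2 f) E = sum f E"
proof -
  have "sum (r2 f) E = sum f E + (\<Sum>v\<in>E. \<Sum>j\<in>{1..k}. f (w (2*j)) * (dl (w (2*j-1)) v - dl (w (2*j)) v))"
    unfolding r2_def by (simp add: sum.distrib)
  also have "(\<Sum>v\<in>E. \<Sum>j\<in>{1..k}. f (w (2*j)) * (dl (w (2*j-1)) v - dl (w (2*j)) v))
     = (\<Sum>j\<in>{1..k}. f (w (2*j)) * (sum (dl (w (2*j-1))) E - sum (dl (w (2*j))) E))"
    by (subst sum.swap) (simp add: sum_subtractf flip: sum_distrib_left)
  also have "\<dots> = 0" by (intro sum.neutral) (auto simp: sum_dl)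
  finally show ?thesis by simp
qed

lemma r2_cont: "continuous_map (subtopology (powertop_real UNIV) S) euclideanreal (\<lambda>f. r2 f v)"
  unfolding r2_def by (intro continuous_intros) auto

lemma Tri_sub1: "TriCl \<subseteq> Cl1" by (auto simp: Cl1_def)
lemma Tri_sub2: "TriCl \<subseteq> Cl2" by (auto simp: Cl2_def)
lemma Tri_sub3: "TriCl \<subseteq> Cl3" by (auto simp: Cl3_def Cl2_def)

lemma Cl1_D: "f \<in> PP Cl1 \<Longrightarrow> 1 \<le> j \<Longrightarrow> j \<le> k \<Longrightarrow> f (c (2*j-1)) = 0 \<or> f (w (2*j)) = 0"
proof -
  assume f: "f \<in> PP Cl1" and j: "1 \<le> j" "j \<le> k"
  have "{c (2*j-1), w (2*j)} \<in> Cl1" using j unfolding Cl1_def by blast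
  then have "\<exists>e\<in>{c (2*j-1), w (2*j)}. f e = 0" using f unfolding PP_def sat_def by blast
  then show ?thesis by auto
qed

lemma TriBoth2: assumes f: "f \<in> PP Cl1" and cl: "cl \<in> Cl1"
  shows "\<exists>e\<in>cl. f e = 0 \<and> r2 f e = 0"
proof (cases "cl \<in> TriCl")
  case True
  note D = PP_D[OF f Tri_sub1]
  obtain i where i: "i < n" "cl = {c (pre i), c i, w i}" using True by (auto simp: TriCl_def)
  consider "f (c (pre i)) = 0" | "f (c i) = 0" | "f (w i) = 0" using D(4)[OF i(1)] by blast
  then show ?thesis
  proof cases
    case 1 then show ?thesis using i by (auto simp: r2_c)
  next
    case 2 then show ?thesis using i by (auto simp: r2_c)
  next
    case 3
    show ?thesis
    proof (cases "odd i \<and> f (w (Suc i)) \<noteq> 0")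
      case True
      define j where "j = Suc i div 2"
      have oi: "odd i" using True by simp
      have j1: "1 \<le> j" using oi unfolding j_def by presburger
      have j2: "j \<le> k" using oi i n_eq unfolding j_def by presburger
      have j3: "2*j - 1 = i" using oi unfolding j_def by presburger
      have j: "1 \<le> j" "j \<le> k" "2*j - 1 = i" using j1 j2 j3 by auto
      have j4: "2*j = Suc i" using j1 j3 by simp
      have "f (c i) = 0" using Cl1_D[OF f j(1,2)] True j3 j4 by simp
      then show ?thesis using i by (auto simp: r2_c)
    next
      case False
      then have "r2 f (w i) = 0" using 3 i by (auto simp: r2_w)
      then show ?thesis using 3 i by auto
    qed
  qed
next
  case False
  then obtain j where j: "1 \<le> j" "j \<le> k" "cl = {c (2*j-1), w (2*j)}" using cl by (auto simp: Cl1_def)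
  show ?thesis
  proof (cases "f (c (2*j-1)) = 0")
    case True then show ?thesis using j by (auto simp: r2_c)
  next
    case False
    then have "f (w (2*j)) = 0" using Cl1_D[OF f j(1,2)] by simp
    moreover have "r2 f (w (2*j)) = 0" using j calculation by (simp add: r2_w)
    ultimately show ?thesis using j by auto
  qed
qed

lemma r2_into: assumes f: "f \<in> PP Cl1" shows "Good (r2 f) \<and> sat Cl2 (r2 f)"
proof -
  note D = PP_D[OF f Tri_sub1]
  have nn: "0 \<le> r2 f v" for v
  proof (cases "v \<in> E")
    case True
    then show ?thesis
    proof (rule E_cases)
      fix i assume "i < n" "v = c i" then show ?thesis using D(1) by (simp add: r2_c)
    next
      fix i assume i: "i < n" "v = w i"
      then show ?thesis using D(1)[of "w i"] D(1)[of "w (Suc i)"] by (simp add: r2_w)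
    qed
  qed (use D in \<open>simp add: r2_out\<close>)
  have G: "Good (r2 f)" unfolding Good_def using nn r2_out D(2,3) r2_sum by auto
  have "\<exists>e\<in>cl. r2 f e = 0" if cl2: "cl \<in> Cl2" for cl
  proof (cases "cl \<in> TriCl")
    case True then show ?thesis using TriBoth2[OF f] by (auto simp: Cl1_def)
  next
    case False
    then obtain j where j: "1 \<le> j" "j \<le> k" "cl = {w (2*j)}" using cl2 by (auto simp: Cl2_def)
    then show ?thesis by (simp add: r2_w)
  qed
  then show ?thesis using G by (simp add: sat_def)
qed

lemma Cl2_sub: "PP Cl2 \<subseteq> PP Cl1"
proof
  fix f assume f: "f \<in> PP Cl2"
  have "\<exists>e\<in>cl. f e = 0" if cl1: "cl \<in> Cl1" for cl
  proof (cases "cl \<in> TriCl")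
    case True then show ?thesis using f by (auto simp: PP_def sat_def Cl2_def)
  next
    case False
    then obtain j where j: "1 \<le> j" "j \<le> k" "cl = {c (2*j-1), w (2*j)}" using cl1 by (auto simp: Cl1_def)
    have "{w (2*j)} \<in> Cl2" using j by (auto simp: Cl2_def)
    then have "f (w (2*j)) = 0" using f by (auto simp: PP_def sat_def)
    then show ?thesis using j by auto
  qed
  then show "f \<in> PP Cl1" using f by (auto simp: PP_def sat_def)
qed

lemma r2_fix: assumes f: "f \<in> PP Cl2" shows "r2 f = f"
proof -
  have "f (w (2*j)) = 0" if "j \<in> {1..k}" for j
  proof -
    have "{w (2*j)} \<in> Cl2" using that by (auto simp: Cl2_def)
    then show ?thesis using f by (auto simp: PP_def sat_def)
  qed
  then show ?thesis unfolding r2_def by (auto intro!: sum.neutral)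
qed

lemma stage2: "subtopology (powertop_real UNIV) (PP Cl1) homotopy_equivalent_space subtopology (powertop_real UNIV) (PP Cl2)"
  by (rule stage[OF Cl2_sub r2_into r2_fix r2_cont TriBoth2])

end
context wc begin

definition m3 :: "(nat set \<Rightarrow> real) \<Rightarrow> real" where "m3 f = min (f (c (2*k))) (f (w 0))"
definition r3 :: "(nat set \<Rightarrow> real) \<Rightarrow> (nat set \<Rightarrow> real)" where
  "r3 f = (\<lambda>v. f v + m3 f * (2 * dl (c 1) v - dl (c (2*k)) v - dl (w 0) v))"

lemma one_lt: "1 < n" using n3 by simp
lemma two_k_ne1: "2*k \<noteq> 1" by presburger

lemma r3_c: assumes "i < n"
  shows "r3 f (c i) = f (c i) + (if i = 1 then 2 * m3 f else 0) - (if i = 2*k then m3 f else 0)"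
  unfolding r3_def using assms one_lt two_k_ne1 by (auto simp: dl_def)

lemma r3_w: "r3 f (w i) = f (w i) - (if i = 0 then m3 f else 0)"
  unfolding r3_def using one_lt by (auto simp: dl_def)

lemma r3_out: "v \<notin> E \<Longrightarrow> r3 f v = f v"
  unfolding r3_def using one_lt by (simp add: dl_out)

lemma r3_sum: "sum (r3 f) E = sum f E"
proof -
  have "sum (r3 f) E = sum f E + m3 f * (2 * sum (dl (c 1)) E - sum (dl (c (2*k))) E - sum (dl (w 0)) E)"
    unfolding r3_def by (simp add: sum.distrib sum_subtractf flip: sum_distrib_left)
  then show ?thesis using one_lt by (simp add: sum_dl)
qed

lemma r3_cont: "continuous_map (subtopology (powertop_real UNIV) S) euclideanreal (\<lambda>f. r3 f v)"
  unfolding r3_def m3_def by (intro continuous_intros)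

lemma Cl2_D: "f \<in> PP Cl2 \<Longrightarrow> 1 \<le> j \<Longrightarrow> j \<le> k \<Longrightarrow> f (w (2*j)) = 0"
proof -
  assume f: "f \<in> PP Cl2" and j: "1 \<le> j" "j \<le> k"
  have "{w (2*j)} \<in> Cl2" using j unfolding Cl2_def by blast
  then have "\<exists>e\<in>{w (2*j)}. f e = 0" using f unfolding PP_def sat_def by blast
  then show ?thesis by auto
qed

lemma TriBoth3: assumes f: "f \<in> PP Cl2" and cl: "cl \<in> Cl2"
  shows "\<exists>e\<in>cl. f e = 0 \<and> r3 f e = 0"
proof -
  note D = PP_D[OF f Tri_sub2]
  have Zc: "r3 f (c i) = 0" if "i < n" "f (c i) = 0" "i \<noteq> 1" for i
    using that D(1)[of "w 0"] by (auto simp: r3_c m3_def)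
  have Zw: "r3 f (w i) = 0" if "f (w i) = 0" for i
    using that D(1)[of "c (2*k)"] by (auto simp: r3_w m3_def)
  show ?thesis
  proof (cases "cl \<in> TriCl")
    case True
    obtain i where i: "i < n" "cl = {c (pre i), c i, w i}" using True by (auto simp: TriCl_def)
    consider "f (c (pre i)) = 0" | "f (c i) = 0" | "f (w i) = 0" using D(4)[OF i(1)] by blast
    then show ?thesis
    proof cases
      case 1
      show ?thesis
      proof (cases "pre i = 1")
        case False then show ?thesis using 1 i Zc[of "pre i"] by auto
      next
        case True
        then have "i = 2" using pre0 k_ge by (cases "i = 0") (auto simp: preS)
        then have "f (w i) = 0" using Cl2_D[OF f, of 1] k_ge by simp
        then show ?thesis using i Zw by auto
      qed
    next
      case 2
      show ?thesis
      proof (cases "i = 1")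
        case False then show ?thesis using 2 i Zc[of i] by auto
      next
        case True
        show ?thesis
        proof (cases "f (c 0) = 0")
          case True
          then show ?thesis using \<open>i = 1\<close> i Zc[of 0] by (auto simp: pre_def)
        next
          case False
          have "f (c (pre 0)) = 0 \<or> f (c 0) = 0 \<or> f (w 0) = 0" using D(4)[of 0] n3 by simp
          then have "m3 f = 0" using False D(1) pre0 by (auto simp: m3_def intro: min0)
          then have "r3 f (c 1) = 0" using 2 \<open>i = 1\<close> one_lt two_k_ne1 by (simp add: r3_c)
          then show ?thesis using 2 \<open>i = 1\<close> i by auto
        qed
      qed
    next
      case 3 then show ?thesis using i Zw by auto
    qed
  next
    case False
    then obtain j where j: "1 \<le> j" "j \<le> k" "cl = {w (2*j)}" using cl by (auto simp: Cl2_def)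
    then show ?thesis using Cl2_D[OF f j(1,2)] Zw by auto
  qed
qed

lemma r3_into: assumes f: "f \<in> PP Cl2" shows "Good (r3 f) \<and> sat Cl3 (r3 f)"
proof -
  note D = PP_D[OF f Tri_sub2]
  have m: "0 \<le> m3 f" "m3 f \<le> f (c (2*k))" "m3 f \<le> f (w 0)" using D(1) by (auto simp: m3_def)
  have nn: "0 \<le> r3 f v" for v
  proof (cases "v \<in> E")
    case True
    then show ?thesis
    proof (rule E_cases)
      fix i assume i: "i < n" "v = c i" then show ?thesis using D(1)[of "c i"] m by (simp add: r3_c)
    next
      fix i assume i: "i < n" "v = w i"
      then show ?thesis using D(1)[of "w i"] m by (simp add: r3_w)
    qed
  qed (use D in \<open>simp add: r3_out\<close>)
  have G: "Good (r3 f)" unfolding Good_def using nn r3_out D(2,3) r3_sum by auto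
  have "\<exists>e\<in>cl. r3 f e = 0" if cl3: "cl \<in> Cl3" for cl
  proof (cases "cl \<in> Cl2")
    case True then show ?thesis using TriBoth3[OF f] by blast
  next
    case False
    then have "cl = {c (2*k), w 0}" using cl3 by (auto simp: Cl3_def)
    moreover have "r3 f (c (2*k)) = f (c (2*k)) - m3 f" using two_k_ne1 by (simp add: r3_c)
    moreover have "r3 f (w 0) = f (w 0) - m3 f" by (simp add: r3_w)
    ultimately show ?thesis by (auto simp: m3_def min_def)
  qed
  then show ?thesis using G by (simp add: sat_def)
qed

lemma Cl3_sub: "PP Cl3 \<subseteq> PP Cl2" by (rule PP_mono) (auto simp: Cl3_def)

lemma r3_fix: assumes f: "f \<in> PP Cl3" shows "r3 f = f"
proof -
  have "{c (2*k), w 0} \<in> Cl3" unfolding Cl3_def by blast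
  then have "\<exists>e\<in>{c (2*k), w 0}. f e = 0" using f unfolding PP_def sat_def by blast
  moreover have "\<And>v. 0 \<le> f v" using f by (auto simp: PP_def Good_def)
  ultimately have "m3 f = 0" by (auto simp: m3_def intro: min0)
  then show ?thesis unfolding r3_def by simp
qed

lemma stage3: "subtopology (powertop_real UNIV) (PP Cl2) homotopy_equivalent_space subtopology (powertop_real UNIV) (PP Cl3)"
  by (rule stage[OF Cl3_sub r3_into r3_fix r3_cont TriBoth3])

end
context wc begin

definition Phi :: "(nat set \<Rightarrow> real) \<Rightarrow> nat \<Rightarrow> real" where
  "Phi f i = (if i < 2*k then (if even i then f (c i) - f (w (Suc i)) else f (c i) - f (w i))
              else if i = 2*k then f (c (2*k)) - f (w 0) else 0)"
definition nrm :: "(nat \<Rightarrow> real) \<Rightarrow> real" where "nrm y = sqrt (\<Sum>i\<le>2*k. y i * y i)"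
definition FF :: "(nat set \<Rightarrow> real) \<Rightarrow> nat \<Rightarrow> real" where "FF f = (\<lambda>i. Phi f i / nrm (Phi f))"
definition MM :: "(nat \<Rightarrow> real) \<Rightarrow> nat \<Rightarrow> real" where
  "MM y j = max 0 (max (- y (2*j)) (- y (Suc (2*j))))"
definition rC :: "(nat \<Rightarrow> real) \<Rightarrow> nat \<Rightarrow> real" where
  "rC y i = (if i < 2*k then y i + MM y (i div 2) else max (y (2*k)) 0)"
definition rW :: "(nat \<Rightarrow> real) \<Rightarrow> nat \<Rightarrow> real" where
  "rW y i = (if i = 0 then max (- y (2*k)) 0 else if odd i then MM y (i div 2) else 0)"
definition mk :: "(nat \<Rightarrow> real) \<Rightarrow> (nat \<Rightarrow> real) \<Rightarrow> nat set \<Rightarrow> real" where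
  "mk a b = (\<lambda>v. (\<Sum>i<n. dl (c i) v * a i) + (\<Sum>i<n. dl (w i) v * b i))"
definition ZZ :: "(nat \<Rightarrow> real) \<Rightarrow> real" where "ZZ y = (\<Sum>i<n. rC y i) + (\<Sum>i<n. rW y i)"
definition GG :: "(nat \<Rightarrow> real) \<Rightarrow> nat set \<Rightarrow> real" where "GG y = (\<lambda>v. mk (rC y) (rW y) v / ZZ y)"

definition SPH :: "(nat \<Rightarrow> real) set" where
  "SPH = {x. (\<Sum>i\<le>2*k. (x i)\<^sup>2) = 1 \<and> (\<forall>i>2*k. x i = 0)}"

lemma nsph: "nsphere (n - 1) = subtopology (powertop_real UNIV) SPH"
proof -
  have "n - 1 = 2*k" using n_eq by simp
  then show ?thesis by (simp add: nsphere SPH_def)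
qed

lemma mk_c: "i < n \<Longrightarrow> mk a b (c i) = a i"
proof -
  assume i: "i < n"
  have "(\<Sum>j<n. dl (c j) (c i) * a j) = (\<Sum>j<n. if j = i then a j else 0)"
    by (rule sum.cong) (use i in \<open>auto simp: dl_def\<close>)
  moreover have "(\<Sum>j<n. dl (w j) (c i) * b j) = 0"
    by (rule sum.neutral) (use i in \<open>auto simp: dl_def\<close>)
  ultimately show ?thesis using i by (simp add: mk_def)
qed

lemma mk_w: "i < n \<Longrightarrow> mk a b (w i) = b i"
proof -
  assume i: "i < n"
  have "(\<Sum>j<n. dl (w j) (w i) * b j) = (\<Sum>j<n. if j = i then b j else 0)"
    by (rule sum.cong) (use i in \<open>auto simp: dl_def\<close>)
  moreover have "(\<Sum>j<n. dl (c j) (w i) * a j) = 0"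
    by (rule sum.neutral) (use i in \<open>auto simp: dl_def\<close>)
  ultimately show ?thesis using i by (simp add: mk_def)
qed

lemma mk_out: "v \<notin> E \<Longrightarrow> mk a b v = 0"
  unfolding mk_def by (auto intro!: sum.neutral simp: dl_out)

lemma mk_sum: "sum (mk a b) E = (\<Sum>i<n. a i) + (\<Sum>i<n. b i)"
  by (simp add: Good_sum_split mk_c mk_w)

lemma mk_nonneg: "(\<And>i. 0 \<le> a i) \<Longrightarrow> (\<And>i. 0 \<le> b i) \<Longrightarrow> 0 \<le> mk a b v"
  unfolding mk_def dl_def by (intro add_nonneg_nonneg sum_nonneg) auto

lemma MM_ge: "- y (2*j) \<le> MM y j" "- y (Suc (2*j)) \<le> MM y j" "0 \<le> MM y j"
  by (auto simp: MM_def)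

lemma rC_nonneg: "0 \<le> rC y i"
proof (cases "i < 2*k")
  case True
  have "i = 2*(i div 2) \<or> i = Suc (2*(i div 2))" by presburger
  then show ?thesis using True MM_ge[of y "i div 2"] by (auto simp: rC_def)
qed (auto simp: rC_def)

lemma rW_nonneg: "0 \<le> rW y i" using MM_ge by (auto simp: rW_def)

lemma ZZ_nonneg: "0 \<le> ZZ y" unfolding ZZ_def using rC_nonneg rW_nonneg by (simp add: sum_nonneg)

lemma Phi_mk: "Phi (mk (rC y) (rW y)) i = (if i \<le> 2*k then y i else 0)"
proof -
  consider "i < 2*k" "even i" | "i < 2*k" "odd i" | "i = 2*k" | "i > 2*k" by linarith
  then show ?thesis
  proof cases
    case 1
    have "Suc i < n" using 1 n_eq by simp
    moreover have "Suc i div 2 = i div 2" using 1 by presburger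
    ultimately show ?thesis using 1 n_eq by (simp add: Phi_def mk_c mk_w rC_def rW_def)
  next
    case 2
    then have "i \<noteq> 0" by (metis odd_pos not_gr0)
    then show ?thesis using 2 n_eq by (simp add: Phi_def mk_c mk_w rC_def rW_def)
  next
    case 3 then show ?thesis using n_eq by (simp add: Phi_def mk_c mk_w rC_def rW_def max_def)
  next
    case 4 then show ?thesis by (simp add: Phi_def)
  qed
qed

lemma Phi_scale: "Phi (\<lambda>v. g v / z) i = Phi g i / z"
  by (simp add: Phi_def diff_divide_distrib)

lemma max3: "0 \<le> (a::real) \<Longrightarrow> 0 \<le> b \<Longrightarrow> 0 \<le> x \<Longrightarrow> a = 0 \<or> b = 0 \<or> x = 0 \<Longrightarrow> max 0 (max (x - a) (x - b)) = x"
  by (auto simp: max_def)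

lemma Cl3_D: "f \<in> PP Cl3 \<Longrightarrow> f (c (2*k)) = 0 \<or> f (w 0) = 0"
proof -
  assume f: "f \<in> PP Cl3"
  have "{c (2*k), w 0} \<in> Cl3" unfolding Cl3_def by blast
  then have "\<exists>e\<in>{c (2*k), w 0}. f e = 0" using f unfolding PP_def sat_def by blast
  then show ?thesis by auto
qed

lemma recover:
  assumes f: "f \<in> PP Cl3" and i: "i < n"
  shows "rC (Phi f) i = f (c i)" "rW (Phi f) i = f (w i)"
proof -
  note D = PP_D[OF f Tri_sub3]
  have f2: "f \<in> PP Cl2" using f Cl3_sub by auto
  have MMf: "MM (Phi f) j = f (w (Suc (2*j)))" if j: "j < k" for j
  proof -
    have p: "pre (Suc (2*j)) = 2*j" by (simp add: preS)
    have "Suc (2*j) < n" using j n_eq by simp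
    then have "f (c (2*j)) = 0 \<or> f (c (Suc (2*j))) = 0 \<or> f (w (Suc (2*j))) = 0" using D(4) p by metis
    moreover have "Phi f (2*j) = f (c (2*j)) - f (w (Suc (2*j)))" using j by (simp add: Phi_def)
    moreover have "Phi f (Suc (2*j)) = f (c (Suc (2*j))) - f (w (Suc (2*j)))" using j by (simp add: Phi_def)
    ultimately show ?thesis unfolding MM_def using D(1) max3[of "f (c (2*j))" "f (c (Suc (2*j)))" "f (w (Suc (2*j)))"] by simp
  qed
  have zz: "f (c (2*k)) = 0 \<or> f (w 0) = 0" using Cl3_D[OF f] .
  show "rC (Phi f) i = f (c i)"
  proof (cases "i < 2*k")
    case True
    have jk: "i div 2 < k" using True by linarith
    show ?thesis
    proof (cases "even i")
      case True
      then have "Suc (2 * (i div 2)) = Suc i" by presburger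
      then show ?thesis using True \<open>i < 2*k\<close> MMf[OF jk] by (simp add: rC_def Phi_def)
    next
      case False
      then have "Suc (2 * (i div 2)) = i" by presburger
      then show ?thesis using False \<open>i < 2*k\<close> MMf[OF jk] by (simp add: rC_def Phi_def)
    qed
  next
    case False
    then have "i = 2*k" using i n_eq by simp
    then show ?thesis using zz D(1)[of "w 0"] D(1)[of "c (2*k)"] by (auto simp: rC_def Phi_def max_def)
  qed
  show "rW (Phi f) i = f (w i)"
  proof -
    consider "i = 0" | "odd i" | "even i" "i \<noteq> 0" by blast
    then show ?thesis
    proof cases
      case 1 then show ?thesis using zz D(1)[of "w 0"] D(1)[of "c (2*k)"] by (auto simp: rW_def Phi_def max_def)
    next
      case 2
      have jk: "i div 2 < k" using 2 i n_eq by presburger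
      have "Suc (2 * (i div 2)) = i" using 2 by presburger
      then show ?thesis using 2 MMf[OF jk] by (auto simp: rW_def)
    next
      case 3
      have "1 \<le> i div 2" "i div 2 \<le> k" "2 * (i div 2) = i" using 3 i n_eq by presburger+
      then have "f (w i) = 0" using Cl2_D[OF f2, of "i div 2"] by simp
      then show ?thesis using 3 by (simp add: rW_def)
    qed
  qed
qed

end
context wc begin

lemma MM0: "MM (\<lambda>_. 0) j = 0" by (simp add: MM_def)
lemma rC0: "rC (\<lambda>_. 0) i = 0" by (simp add: rC_def MM0)
lemma rW0: "rW (\<lambda>_. 0) i = 0" by (simp add: rW_def MM0)

lemma max_div: "0 < (N::real) \<Longrightarrow> max (a / N) (b / N) = max a b / N"
  by (simp add: max_def divide_le_cancel)

lemma MM_scale: "0 < N \<Longrightarrow> MM (\<lambda>i. y i / N) j = MM y j / N"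
proof -
  assume N: "0 < N"
  have "MM (\<lambda>i. y i / N) j = max (0 / N) (max (- y (2*j) / N) (- y (Suc (2*j)) / N))"
    by (simp add: MM_def)
  also have "\<dots> = MM y j / N" using N by (simp only: max_div MM_def)
  finally show ?thesis .
qed

lemma rC_scale: "0 < N \<Longrightarrow> rC (\<lambda>i. y i / N) i = rC y i / N"
  using max_div[of N "y (2*k)" 0] by (simp add: rC_def MM_scale add_divide_distrib)

lemma rW_scale: "0 < N \<Longrightarrow> rW (\<lambda>i. y i / N) i = rW y i / N"
  using max_div[of N "- y (2*k)" 0] by (simp add: rW_def MM_scale)

lemma sq_sum_zero: "(\<Sum>i\<le>(m::nat). (y i) * (y i :: real)) = 0 \<Longrightarrow> i \<le> m \<Longrightarrow> y i = 0"
proof -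
  assume a: "(\<Sum>i\<le>m. (y i) * (y i :: real)) = 0" "i \<le> m"
  have "\<forall>x\<in>{..m}. y x * y x = 0" using sum_nonneg_eq_0_iff[of "{..m}" "\<lambda>i. y i * y i"] a(1) by simp
  then show ?thesis using a(2) by simp
qed

lemma nrm_pos: assumes f: "f \<in> PP Cl3" shows "0 < nrm (Phi f)"
proof (rule ccontr)
  note D = PP_D[OF f Tri_sub3]
  assume "\<not> 0 < nrm (Phi f)"
  then have "(\<Sum>i\<le>2*k. Phi f i * Phi f i) = 0" unfolding nrm_def
    by (metis real_sqrt_eq_zero_cancel_iff real_sqrt_ge_zero sum_nonneg zero_le_square order.antisym not_less)
  then have "Phi f i = 0" for i using sq_sum_zero[of "Phi f" "2*k" i] by (cases "i \<le> 2*k") (auto simp: Phi_def)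
  then have P0: "Phi f = (\<lambda>_. 0)" by auto
  have "f (c i) = 0" "f (w i) = 0" if "i < n" for i
    using recover[OF f that] P0 rC0 rW0 by auto
  then have "sum f E = 0" by (simp add: Good_sum_split)
  then show False using D(3) by simp
qed

lemma ZZ_pos: assumes y: "y \<in> SPH" shows "0 < ZZ y"
proof (rule ccontr)
  assume "\<not> 0 < ZZ y"
  then have Z0: "ZZ y = 0" using ZZ_nonneg[of y] by simp
  have s1: "(\<Sum>i<n. rC y i) = 0" "(\<Sum>i<n. rW y i) = 0"
    using Z0 unfolding ZZ_def using sum_nonneg[of "{..<n}" "rC y"] sum_nonneg[of "{..<n}" "rW y"] rC_nonneg rW_nonneg
    by (smt (verit))+
  have "rC y i = 0" "rW y i = 0" if "i < n" for i
    using s1 sum_nonneg_eq_0_iff[of "{..<n}" "rC y"] sum_nonneg_eq_0_iff[of "{..<n}" "rW y"] rC_nonneg rW_nonneg that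
    by auto
  then have "mk (rC y) (rW y) = (\<lambda>_. 0)" unfolding mk_def by (auto intro!: sum.neutral)
  then have "y i = 0" if "i \<le> 2*k" for i using Phi_mk[of y i] that by (auto simp: Phi_def split: if_splits)
  then have "(\<Sum>i\<le>2*k. (y i)\<^sup>2) = 0" by simp
  then show False using y by (simp add: SPH_def)
qed

lemma FF_in: assumes f: "f \<in> PP Cl3" shows "FF f \<in> SPH"
proof -
  define N where "N = nrm (Phi f)"
  have N: "0 < N" using nrm_pos[OF f] by (simp add: N_def)
  have NN: "N * N = (\<Sum>i\<le>2*k. Phi f i * Phi f i)"
    unfolding N_def nrm_def by (simp add: sum_nonneg)
  have "(\<Sum>i\<le>2*k. (FF f i)\<^sup>2) = (\<Sum>i\<le>2*k. Phi f i * Phi f i) / (N * N)"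
    unfolding FF_def N_def[symmetric] by (simp add: power2_eq_square sum_divide_distrib)
  also have "\<dots> = 1" using N by (simp add: NN[symmetric])
  finally show ?thesis by (auto simp: SPH_def FF_def Phi_def)
qed

lemma GG_in: assumes y: "y \<in> SPH" shows "GG y \<in> PP Cl3"
proof -
  have Z: "0 < ZZ y" using ZZ_pos[OF y] .
  have nn: "0 \<le> GG y v" for v unfolding GG_def using Z by (simp add: mk_nonneg rC_nonneg rW_nonneg)
  have out: "GG y v = 0" if "v \<notin> E" for v using that by (simp add: GG_def mk_out)
  have sm: "sum (GG y) E = 1" unfolding GG_def using Z
    by (simp add: sum_divide_distrib[symmetric] mk_sum ZZ_def)
  have zc: "GG y (c i) = 0 \<longleftrightarrow> rC y i = 0" if "i < n" for i using Z that by (simp add: GG_def mk_c)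
  have zw: "GG y (w i) = 0 \<longleftrightarrow> rW y i = 0" if "i < n" for i using Z that by (simp add: GG_def mk_w)
  have kk: "rC y (2*k) = 0 \<or> rW y 0 = 0" by (simp add: rC_def rW_def max_def)
  have tri: "rC y (pre i) = 0 \<or> rC y i = 0 \<or> rW y i = 0" if i: "i < n" for i
  proof -
    consider "i = 0" | "even i" "i \<noteq> 0" | "odd i" by blast
    then show ?thesis
    proof cases
      case 1 then show ?thesis using kk pre0 by auto
    next
      case 2 then show ?thesis by (simp add: rW_def)
    next
      case 3
      define j where "j = i div 2"
      have ij: "i = Suc (2*j)" using 3 unfolding j_def by presburger
      have jk: "j < k" using ij i n_eq by simp
      have pi: "pre i = 2*j" using ij by (simp add: preS)
      have "MM y j = 0 \<or> MM y j = - y (2*j) \<or> MM y j = - y (Suc (2*j))" by (auto simp: MM_def max_def)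
      then show ?thesis
      proof (elim disjE)
        assume "MM y j = 0" then show ?thesis using 3 ij by (simp add: rW_def j_def[symmetric])
      next
        assume "MM y j = - y (2*j)"
        then have "rC y (2*j) = 0" using jk by (simp add: rC_def)
        then show ?thesis using pi by simp
      next
        assume "MM y j = - y (Suc (2*j))"
        then have "rC y (Suc (2*j)) = 0" using jk by (simp add: rC_def)
        then show ?thesis using ij by simp
      qed
    qed
  qed
  have "\<exists>e\<in>cl. GG y e = 0" if cl: "cl \<in> Cl3" for cl
  proof -
    consider (t) i where "i < n" "cl = {c (pre i), c i, w i}" | (e) j where "1 \<le> j" "j \<le> k" "cl = {w (2*j)}"
      | (z) "cl = {c (2*k), w 0}"
      using cl unfolding Cl3_def Cl2_def TriCl_def by blast
    then show ?thesis
    proof cases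
      case t then show ?thesis using tri[OF t(1)] zc zw by auto
    next
      case e
      have "rW y (2*j) = 0" using e by (simp add: rW_def)
      then show ?thesis using zw[of "2*j"] e by auto
    next
      case z then show ?thesis using kk zc[of "2*k"] zw[of 0] n3 by auto
    qed
  qed
  then show ?thesis unfolding PP_def Good_def sat_def using nn out sm by auto
qed

lemma GF: assumes f: "f \<in> PP Cl3" shows "GG (FF f) = f"
proof -
  note D = PP_D[OF f Tri_sub3]
  define N where "N = nrm (Phi f)"
  have N: "0 < N" using nrm_pos[OF f] by (simp add: N_def)
  have F: "FF f = (\<lambda>i. Phi f i / N)" by (simp add: FF_def N_def)
  have rc: "rC (FF f) i = f (c i) / N" "rW (FF f) i = f (w i) / N" if "i < n" for i
    using recover[OF f that] N by (simp_all add: F rC_scale rW_scale)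
  have Z: "ZZ (FF f) = 1 / N"
  proof -
    have "ZZ (FF f) = ((\<Sum>i<n. f (c i)) + (\<Sum>i<n. f (w i))) / N"
      unfolding ZZ_def using rc by (simp add: sum_divide_distrib add_divide_distrib)
    also have "\<dots> = 1 / N" using D(3) by (simp add: Good_sum_split)
    finally show ?thesis .
  qed
  show ?thesis
  proof
    fix v
    show "GG (FF f) v = f v"
    proof (cases "v \<in> E")
      case True
      then show ?thesis
      proof (rule E_cases)
        fix i assume "i < n" "v = c i" then show ?thesis using rc Z N by (simp add: GG_def mk_c)
      next
        fix i assume "i < n" "v = w i" then show ?thesis using rc Z N by (simp add: GG_def mk_w)
      qed
    next
      case False then show ?thesis using D(2) by (simp add: GG_def mk_out)
    qed
  qed
qed

lemma FG: assumes y: "y \<in> SPH" shows "FF (GG y) = y"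
proof -
  define Z where "Z = ZZ y"
  have Z: "0 < Z" using ZZ_pos[OF y] by (simp add: Z_def)
  have yz: "y i = 0" if "i > 2*k" for i using y that by (simp add: SPH_def)
  have P: "Phi (GG y) = (\<lambda>i. y i / Z)"
  proof
    fix i show "Phi (GG y) i = y i / Z"
      unfolding GG_def Phi_scale Phi_mk Z_def using yz[of i] by auto
  qed
  have "(\<Sum>i\<le>2*k. y i / Z * (y i / Z)) = (\<Sum>i\<le>2*k. (y i)\<^sup>2) / (Z * Z)"
    by (simp add: power2_eq_square sum_divide_distrib)
  also have "\<dots> = 1 / (Z * Z)" using y by (simp add: SPH_def)
  finally have "nrm (Phi (GG y)) = 1 / Z" unfolding nrm_def P using Z by (simp add: real_sqrt_divide)
  then show ?thesis using Z unfolding FF_def P by simp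
qed

end
context wc begin

lemma tops: "topspace (subtopology (powertop_real UNIV) S) = S" by simp

lemma Phi_cont: "continuous_map (subtopology (powertop_real UNIV) S) euclideanreal (\<lambda>f. Phi f i)"
  by (cases "i < 2*k"; cases "even i"; cases "i = 2*k") (simp_all add: Phi_def continuous_map_diff proj_cont)

lemma nrm_cont: "continuous_map (subtopology (powertop_real UNIV) S) euclideanreal (\<lambda>f. nrm (Phi f))"
  unfolding nrm_def by (intro continuous_intros Phi_cont) auto

lemma MM_cont: "continuous_map (subtopology (powertop_real UNIV) S) euclideanreal (\<lambda>y. MM y j)"
  unfolding MM_def by (intro continuous_intros proj_cont)

lemma rC_cont: "continuous_map (subtopology (powertop_real UNIV) S) euclideanreal (\<lambda>y. rC y i)"
  by (cases "i < 2*k") (simp_all add: rC_def continuous_intros proj_cont MM_cont)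

lemma rW_cont: "continuous_map (subtopology (powertop_real UNIV) S) euclideanreal (\<lambda>y. rW y i)"
  by (cases "i = 0"; cases "odd i") (simp_all add: rW_def continuous_intros proj_cont MM_cont)

lemma ZZ_cont: "continuous_map (subtopology (powertop_real UNIV) S) euclideanreal ZZ"
  unfolding ZZ_def by (intro continuous_intros rC_cont rW_cont) auto

lemma mk_cont: "continuous_map (subtopology (powertop_real UNIV) S) euclideanreal (\<lambda>y. mk (rC y) (rW y) v)"
  unfolding mk_def by (intro continuous_intros rC_cont rW_cont) auto

lemma FF_cont: "continuous_map (subtopology (powertop_real UNIV) (PP Cl3)) (subtopology (powertop_real UNIV) SPH) FF"
proof -
  have "continuous_map (subtopology (powertop_real UNIV) (PP Cl3)) euclideanreal (\<lambda>f. FF f i)" for i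
    unfolding FF_def by (rule continuous_map_real_divide[OF Phi_cont nrm_cont]) (use nrm_pos in force)
  then show ?thesis using FF_in
    by (auto simp: continuous_map_in_subtopology continuous_map_componentwise_UNIV)
qed

lemma GG_cont: "continuous_map (subtopology (powertop_real UNIV) SPH) (subtopology (powertop_real UNIV) (PP Cl3)) GG"
proof -
  have "continuous_map (subtopology (powertop_real UNIV) SPH) euclideanreal (\<lambda>y. GG y v)" for v
    unfolding GG_def by (rule continuous_map_real_divide[OF mk_cont ZZ_cont]) (use ZZ_pos in force)
  then show ?thesis using GG_in
    by (auto simp: continuous_map_in_subtopology continuous_map_componentwise_UNIV)
qed

lemma stage4: "subtopology (powertop_real UNIV) (PP Cl3) homeomorphic_space nsphere (n - 1)"
  unfolding nsph homeomorphic_space_def homeomorphic_maps_def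
  using FF_cont GG_cont GF FG by auto

lemma final: "geom_realization E (M2_complex E) homotopy_equivalent_space nsphere (n - 1)"
  unfolding geom_eq
  using homotopy_eqv_trans[OF stage1 homotopy_eqv_trans[OF stage2 homotopy_eqv_trans[OF stage3
          homeomorphic_imp_homotopy_equivalent_space[OF stage4]]]] .

end

theorem mainTheorem7:
  fixes n :: nat
  assumes "n \<ge> 3" and "odd n"
  shows "geom_realization (whiskered_cycle_edges n) (M2_complex (whiskered_cycle_edges n))
           homotopy_equivalent_space nsphere (n - 1)"
proof -
  interpret wc n using assms by unfold_locales
  show ?thesis by (rule final)
qed

end
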